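(* Let $X$ be a Banach space and $A:D(A)\to X$ the infinitesimal generator of a $C_0$-semigroup $T(\cdot)$ on $X$; consider $\dot x=Ax$ with (mild) solutions $\phi(t,x)=T(t)x$, regarded as a system without disturbances. The following are equivalent: (i) $T$ is exponentially stable; (ii) $\{0\}$ is UGAS; (iii) $\{0\}$ is uniformly globally attractive; (iv) $\{0\}$ is uniformly globally weakly attractive; (v) there is a non-coercive Lyapunov function for $\dot x=Ax$ (with respect to $\{0\}$).
   Context: $\mathbb R_+=[0,\infty)$. $T$ is exponentially stable if there are $M,\lambda>0$ with $\|T(t)\|\le Me^{-\lambda t}$ for all $t\ge0$. $\mathcal K$: continuous strictly increasing $\gamma:\mathbb R_+\to\mathbb R_+$ with $\gamma(0)=0$; $\mathcal K_\infty$: unbounded elements of $\mathcal K$; $\mathcal{KL}$: continuous $\beta:\mathbb R_+^2\to\mathbb R_+$ with $\beta(\cdot,t)\in\mathcal K$ for each $t$ and $\beta(r,\cdot)$ strictly decreasing to $0$ for each $r>0$. $\{0\}$ is UGAS if there is $\beta\in\mathcal{KL}$ with $\|T(t)x\|\le\beta(\|x\|,t)$ for all $x\in X,t\ge0$. $\{0\}$ is uniformly globally attractive if for all $r,\varepsilon>0$ there is $\tau$ with $\|T(t)x\|\le\varepsilon$ whenever $\|x\|\le r$, $t\ge\tau$. $\{0\}$ is uniformly globally weakly attractive if for all $\varepsilon,r>0$ there is $\tau$ such that for every $x$ with $\|x\|\le r$ there is $t\le\tau$ with $\|T(t)x\|\le\varepsilon$. A non-coercive Lyapunov function is a continuous $V:X\to\mathbb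 R_+$ with $V(0)=0$, for which there are $\psi_2\in\mathcal K_\infty$, $\alpha\in\mathcal K$ with $0<V(x)\le\psi_2(\|x\|)$ and $\liminf_{t\to0^+}\frac1t(V(T(t)x)-V(x))\le-\alpha(\|x\|)$ for all $x\ne0$. *)

theory Defs
  imports "HOL-Analysis.Analysis"
begin

text \<open>Strongly continuous (C_0) semigroup of bounded linear operators on a Banach space,
  indexed by t \<in> [0,\<infinity>). Values of T at negative times are irrelevant.\<close>
definition c0_semigroup :: "(real \<Rightarrow> ('a::banach \<Rightarrow>\<^sub>L 'a)) \<Rightarrow> bool" where
  "c0_semigroup T \<longleftrightarrow>
     T 0 = id_blinfun \<and>
     (\<forall>t s. t \<ge> 0 \<longrightarrow> s \<ge> 0 \<longrightarrow> T (t + s) = T t o\<^sub>L T s) \<and>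
     (\<forall>x. ((\<lambda>t. blinfun_apply (T t) x) \<longlongrightarrow> x) (at_right 0))"

definition exp_stable :: "(real \<Rightarrow> ('a::banach \<Rightarrow>\<^sub>L 'a)) \<Rightarrow> bool" where
  "exp_stable T \<longleftrightarrow>
     (\<exists>M l. M > 0 \<and> l > 0 \<and> (\<forall>t\<ge>0. norm (T t) \<le> M * exp (- l * t)))"

definition class_K :: "(real \<Rightarrow> real) \<Rightarrow> bool" where
  "class_K \<gamma> \<longleftrightarrow> continuous_on {0..} \<gamma> \<and> strict_mono_on {0..} \<gamma> \<and> \<gamma> 0 = 0"

definition class_Kinf :: "(real \<Rightarrow> real) \<Rightarrow> bool" where
  "class_Kinf \<gamma> \<longleftrightarrow> class_K \<gamma> \<and> \<not> bounded (\<gamma> ` {0..})"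

definition class_KL :: "(real \<Rightarrow> real \<Rightarrow> real) \<Rightarrow> bool" where
  "class_KL \<beta> \<longleftrightarrow>
     continuous_on ({0..} \<times> {0..}) (\<lambda>(r, t). \<beta> r t) \<and>
     (\<forall>t\<ge>0. class_K (\<lambda>r. \<beta> r t)) \<and>
     (\<forall>r>0. strict_antimono_on {0..} (\<beta> r) \<and> (\<beta> r \<longlongrightarrow> 0) at_top)"

definition UGAS :: "(real \<Rightarrow> ('a::banach \<Rightarrow>\<^sub>L 'a)) \<Rightarrow> bool" where
  "UGAS T \<longleftrightarrow> (\<exists>\<beta>. class_KL \<beta> \<and>
     (\<forall>x t. t \<ge> 0 \<longrightarrow> norm (T t x) \<le> \<beta> (norm x) t))"

definition unif_glob_attractive :: "(real \<Rightarrow> ('a::banach \<Rightarrow>\<^sub>L 'a)) \<Rightarrow> bool" where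
  "unif_glob_attractive T \<longleftrightarrow> (\<forall>r>0. \<forall>\<epsilon>>0. \<exists>\<tau>\<ge>0.
     \<forall>x t. norm x \<le> r \<longrightarrow> t \<ge> \<tau> \<longrightarrow> norm (T t x) \<le> \<epsilon>)"

definition unif_glob_weakly_attractive :: "(real \<Rightarrow> ('a::banach \<Rightarrow>\<^sub>L 'a)) \<Rightarrow> bool" where
  "unif_glob_weakly_attractive T \<longleftrightarrow> (\<forall>\<epsilon>>0. \<forall>r>0. \<exists>\<tau>\<ge>0.
     \<forall>x. norm x \<le> r \<longrightarrow> (\<exists>t. 0 \<le> t \<and> t \<le> \<tau> \<and> norm (T t x) \<le> \<epsilon>))"

text \<open>Non-coercive Lyapunov function for x' = Ax (solutions T(t)x) w.r.t. {0};
  the lower Dini derivative is taken in the extended reals.\<close>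
definition noncoercive_lyapunov ::
    "(real \<Rightarrow> ('a::banach \<Rightarrow>\<^sub>L 'a)) \<Rightarrow> ('a \<Rightarrow> real) \<Rightarrow> bool" where
  "noncoercive_lyapunov T V \<longleftrightarrow>
     continuous_on UNIV V \<and> (\<forall>x. V x \<ge> 0) \<and> V 0 = 0 \<and>
     (\<exists>\<psi>2 \<alpha>. class_Kinf \<psi>2 \<and> class_K \<alpha> \<and>
        (\<forall>x. x \<noteq> 0 \<longrightarrow>
           0 < V x \<and> V x \<le> \<psi>2 (norm x) \<and>
           Liminf (at_right 0) (\<lambda>t. ereal ((V (T t x) - V x) / t)) \<le> ereal (- \<alpha> (norm x))))"

end

theory Submission
  imports Defs "HOL-Real_Asymp.Real_Asymp"
begin


lemma ubp:
  fixes F :: "('a::banach \<Rightarrow>\<^sub>L 'b::real_normed_vector) set"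
  assumes pw: "\<And>x. bdd_above ((\<lambda>f. norm (blinfun_apply f x)) ` F)"
  shows "\<exists>B. \<forall>f\<in>F. norm f \<le> B"
proof -
  define C where "C n = {x. \<forall>f\<in>F. norm (blinfun_apply f x) \<le> real n}" for n :: nat
  have clo: "closed (C n)" for n
  proof -
    have "C n = (\<Inter>f\<in>F. {x. norm (blinfun_apply f x) \<le> real n})"
      by (auto simp: C_def)
    also have "closed \<dots>"
      by (intro closed_INT ballI closed_Collect_le continuous_intros) 
    finally show ?thesis .
  qed
  have cov: "(\<Union>n. C n) = UNIV"
  proof safe
    fix x :: 'a
    obtain b where b: "\<And>f. f \<in> F \<Longrightarrow> norm (blinfun_apply f x) \<le> b"
      using pw[of x] by (auto simp: bdd_above_def)
    obtain n where "b \<le> real n" using real_arch_simple by blast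
    then have "x \<in> C n" using b by (force simp: C_def)
    then show "x \<in> (\<Union>n. C n)" by blast
  qed simp
  have "\<exists>n. interior (C n) \<noteq> {}"
  proof (rule ccontr)
    assume "\<not> ?thesis"
    then have "euclidean interior_of \<Union>(range C) = {}"
      by (intro Baire_category_alt) (auto simp: completely_metrizable_space_euclidean clo closed_closedin[symmetric])
    then show False using cov by simp
  qed
  then obtain n y where "y \<in> interior (C n)" by blast
  then obtain d where d: "d > 0" "ball y d \<subseteq> C n"
    using open_contains_ball by (metis interior_subset open_interior subset_trans)
  have small: "norm (blinfun_apply f z) \<le> 2 * real n" if "f \<in> F" "norm z < d" for f z
  proof -
    have "y + z \<in> C n" "y \<in> C n" using d that by (auto simp: dist_norm)
    then have "norm (blinfun_apply f (y + z)) \<le> real n" "norm (blinfun_apply f y) \<le> real n"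
      using that by (auto simp: C_def)
    moreover have "blinfun_apply f z = blinfun_apply f (y + z) - blinfun_apply f y"
      by (simp add: blinfun.add_right)
    ultimately show ?thesis by (metis norm_triangle_ineq4 order_trans add_mono mult_2)
  qed
  have "norm f \<le> 4 * real n / d" if f: "f \<in> F" for f
  proof (rule norm_blinfun_bound)
    show "0 \<le> 4 * real n / d" using d by simp
    fix w :: 'a
    show "norm (blinfun_apply f w) \<le> 4 * real n / d * norm w"
    proof (cases "w = 0")
      case True then show ?thesis by simp
    next
      case False
      define c where "c = d / (2 * norm w)"
      have c: "c > 0" using d False by (simp add: c_def)
      have "norm (c *\<^sub>R w) < d" using d False by (simp add: c_def)
      then have "norm (blinfun_apply f (c *\<^sub>R w)) \<le> 2 * real n" using small f by blast
      then have "c * norm (blinfun_apply f w) \<le> 2 * real n"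
        using c by (simp add: blinfun.scaleR_right)
      then have "norm (blinfun_apply f w) \<le> 2 * real n / c"
        using c by (simp add: field_simps)
      also have "\<dots> = 4 * real n / d * norm w" using d False by (simp add: c_def field_simps)
      finally show ?thesis .
    qed
  qed
  then show ?thesis by blast
qed


lemma c0_facts:
  assumes "c0_semigroup T"
  shows "T 0 = id_blinfun"
    "\<And>t s x. t \<ge> 0 \<Longrightarrow> s \<ge> 0 \<Longrightarrow> blinfun_apply (T (t + s)) x = blinfun_apply (T t) (blinfun_apply (T s) x)"
    "\<And>x. ((\<lambda>t. blinfun_apply (T t) x) \<longlongrightarrow> x) (at_right 0)"
  using assms unfolding c0_semigroup_def by auto

lemma c0_near0:
  assumes "c0_semigroup T" and that: "e > 0"
  shows "\<exists>d>0. \<forall>h. 0 \<le> h \<longrightarrow> h < d \<longrightarrow> norm (blinfun_apply (T h) x - x) < e"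
proof -
  have "\<forall>\<^sub>F h in at_right 0. dist (blinfun_apply (T h) x) x < e"
    using c0_facts(3)[OF assms(1), of x] that by (simp add: tendsto_iff)
  then obtain b where b: "b > 0" "\<And>h. 0 < h \<Longrightarrow> h < b \<Longrightarrow> dist (blinfun_apply (T h) x) x < e"
    by (auto simp: eventually_at_right_field)
  show ?thesis
  proof (intro exI[of _ b] conjI allI impI)
    fix h :: real assume "0 \<le> h" "h < b"
    then show "norm (blinfun_apply (T h) x - x) < e"
      using b that c0_facts(1)[OF assms(1)] by (cases "h = 0") (auto simp: dist_norm)
  qed (use b in auto)
qed

lemma c0_local_bound:
  assumes "c0_semigroup T"
  shows "\<exists>d>0. \<exists>M. \<forall>t. 0 \<le> t \<longrightarrow> t \<le> d \<longrightarrow> norm (T t) \<le> M"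
proof (rule ccontr)
  assume nb: "\<not> ?thesis"
  have "\<forall>n::nat. \<exists>t. 0 \<le> t \<and> t \<le> 1 / (real n + 1) \<and> norm (T t) > real n"
  proof
    fix n :: nat
    have "1 / (real n + 1) > 0" by simp
    then show "\<exists>t. 0 \<le> t \<and> t \<le> 1 / (real n + 1) \<and> norm (T t) > real n"
      using nb by (meson not_le)
  qed
  then obtain t where t: "\<And>n. 0 \<le> t n" "\<And>n. t n \<le> 1 / (real n + 1)" "\<And>n. norm (T (t n)) > real n"
    by metis
  have "bdd_above ((\<lambda>f. norm (blinfun_apply f x)) ` range (\<lambda>n. T (t n)))" for x
  proof -
    obtain d where d: "d > 0" "\<And>h. 0 \<le> h \<Longrightarrow> h < d \<Longrightarrow> norm (blinfun_apply (T h) x - x) < 1"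
      using c0_near0[OF assms, of 1 x] by auto
    obtain N :: nat where N: "1 / d < real N" using reals_Archimedean2 by blast
    have "norm (blinfun_apply (T (t n)) x) \<le> norm x + 1 + (\<Sum>m<N. norm (blinfun_apply (T (t m)) x))" for n
    proof (cases "n < N")
      case True
      then have "norm (blinfun_apply (T (t n)) x) \<le> (\<Sum>m<N. norm (blinfun_apply (T (t m)) x))"
        by (intro member_le_sum) auto
      then show ?thesis by (smt (verit) norm_ge_zero)
    next
      case False
      have "1 / (real n + 1) < d"
      proof -
        have "1 / d < real n + 1" using N False by linarith
        then show ?thesis using d by (simp add: field_simps)
      qed
      then have "t n < d" using t(2)[of n] by linarith
      then have "norm (blinfun_apply (T (t n)) x - x) < 1" using d t(1) by blast
      moreover have "0 \<le> (\<Sum>m<N. norm (blinfun_apply (T (t m)) x))" by (simp add: sum_nonneg)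
      ultimately show ?thesis by (smt (verit) norm_triangle_ineq2)
    qed
    then show ?thesis by (auto simp: bdd_above_def)
  qed
  then obtain B where B: "\<And>f. f \<in> range (\<lambda>n. T (t n)) \<Longrightarrow> norm f \<le> B"
    using ubp by blast
  obtain n :: nat where "B < real n" using reals_Archimedean2 by blast
  with B[of "T (t n)"] t(3)[of n] show False by auto
qed

lemma c0_bound:
  assumes "c0_semigroup T"
  shows "\<exists>K\<ge>1. \<forall>t. 0 \<le> t \<longrightarrow> t \<le> \<tau> \<longrightarrow> norm (T t) \<le> K"
proof -
  obtain d M where d: "d > 0" and M: "\<And>t. 0 \<le> t \<Longrightarrow> t \<le> d \<Longrightarrow> norm (T t) \<le> M"
    using c0_local_bound[OF assms] by blast
  define M' where "M' = max M 1"
  have M': "M' \<ge> 1" "\<And>t. 0 \<le> t \<Longrightarrow> t \<le> d \<Longrightarrow> norm (T t) \<le> M'"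
    using M by (auto simp: M'_def intro: max.coboundedI1)
  have P: "\<forall>t. 0 \<le> t \<longrightarrow> t \<le> real n * d \<longrightarrow> norm (T t) \<le> M' ^ (n + 1)" for n
  proof (induction n)
    case 0
    show ?case using M' d by auto
  next
    case (Suc n)
    show ?case
    proof (intro allI impI)
      fix s :: real assume s: "0 \<le> s" "s \<le> real (Suc n) * d"
      show "norm (T s) \<le> M' ^ (Suc n + 1)"
      proof (cases "s \<le> d")
        case True
        then have "norm (T s) \<le> M'" using M' s by auto
        also have "M' \<le> M' ^ (Suc n + 1)" using M' by (simp add: power_increasing[of 1 "Suc n + 1" M', simplified])
        finally show ?thesis .
      next
        case False
        have eq: "T s = T d o\<^sub>L T (s - d)"
          using assms d False unfolding c0_semigroup_def
          by (metis add.commute diff_add_cancel less_eq_real_def not_le diff_ge_0_iff_ge)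
        have "norm (T s) \<le> norm (T d) * norm (T (s - d))"
          unfolding eq by (rule norm_blinfun_compose)
        also have "\<dots> \<le> M' * M' ^ (n + 1)"
          using Suc.IH M' d False s
          by (intro mult_mono) (auto simp: algebra_simps)
        finally show ?thesis by simp
      qed
    qed
  qed
  obtain n :: nat where "\<tau> / d \<le> real n" using real_arch_simple by blast
  then have "\<tau> \<le> real n * d" using d by (simp add: field_simps)
  then show ?thesis using P[of n] M' one_le_power[of M' "n+1"] by (intro exI[of _ "M' ^ (n+1)"]) auto
qed

lemma c0_cont:
  assumes "c0_semigroup T"
  shows "continuous_on {0..} (\<lambda>s. blinfun_apply (T s) x)"
  unfolding continuous_on_iff
proof (intro ballI allI impI)
  fix t e :: real assume t: "t \<in> {0..}" and e: "0 < e"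
  obtain K where K: "K \<ge> 1" "\<And>s. 0 \<le> s \<Longrightarrow> s \<le> t + 1 \<Longrightarrow> norm (T s) \<le> K"
    using c0_bound[OF assms, of "t+1"] by blast
  obtain d where d: "d > 0" "\<And>h. 0 \<le> h \<Longrightarrow> h < d \<Longrightarrow> norm (blinfun_apply (T h) x - x) < e / K"
    using c0_near0[OF assms, of "e / K" x] e K by auto
  show "\<exists>d>0. \<forall>s\<in>{0..}. dist s t < d \<longrightarrow> dist (blinfun_apply (T s) x) (blinfun_apply (T t) x) < e"
  proof (intro exI[of _ "min d 1"] conjI ballI impI)
    fix s :: real assume s: "s \<in> {0..}" "dist s t < min d 1"
    have key: "norm (blinfun_apply (T b) x - blinfun_apply (T a) x) < e" if "0 \<le> a" "a \<le> b" "b - a < d" "a \<le> t + 1" for a b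
    proof -
      have "blinfun_apply (T b) x = blinfun_apply (T a) (blinfun_apply (T (b - a)) x)"
        using c0_facts(2)[OF assms, of a "b - a" x] that by simp
      then have "blinfun_apply (T b) x - blinfun_apply (T a) x = blinfun_apply (T a) (blinfun_apply (T (b - a)) x - x)"
        by (simp add: blinfun.diff_right)
      also have "norm \<dots> \<le> norm (T a) * norm (blinfun_apply (T (b - a)) x - x)"
        by (rule norm_blinfun)
      also have "\<dots> \<le> K * norm (blinfun_apply (T (b - a)) x - x)"
        using K that by (intro mult_right_mono) auto
      also have "\<dots> < K * (e / K)"
        using d that K by (intro mult_strict_left_mono) auto
      finally show ?thesis using K by simp
    qed
    show "dist (blinfun_apply (T s) x) (blinfun_apply (T t) x) < e"
    proof (cases "t \<le> s")
      case True
      then show ?thesis using key[of t s] s t by (auto simp: dist_norm)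
    next
      case False
      then show ?thesis using key[of s t] s t by (auto simp: dist_norm norm_minus_commute)
    qed
  qed (use d in auto)
qed



lemma exp_to_UGAS:
  fixes T :: "real \<Rightarrow> ('a::banach \<Rightarrow>\<^sub>L 'a)"
  assumes "exp_stable T"
  shows "UGAS T"
proof -
  obtain M l where M: "M > 0" "l > 0" "\<And>t. t \<ge> 0 \<Longrightarrow> norm (T t) \<le> M * exp (- l * t)"
    using assms unfolding exp_stable_def by blast
  define \<beta> where "\<beta> r t = M * r * exp (- l * t)" for r t
  have KL: "class_KL \<beta>"
    unfolding class_KL_def class_K_def
  proof (intro conjI allI impI)
    show "continuous_on ({0..} \<times> {0..}) (\<lambda>(r, t). \<beta> r t)"
      unfolding \<beta>_def split_def by (intro continuous_intros)
    fix t :: real assume "t \<ge> 0"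
    show "continuous_on {0..} (\<lambda>r. \<beta> r t)" unfolding \<beta>_def by (intro continuous_intros)
    show "strict_mono_on {0..} (\<lambda>r. \<beta> r t)"
      by (rule strict_mono_onI) (use M in \<open>simp add: \<beta>_def\<close>)
    show "\<beta> 0 t = 0" by (simp add: \<beta>_def)
  next
    fix r :: real assume r: "r > 0"
    show "strict_antimono_on {0..} (\<beta> r)"
      by (rule monotone_onI) (use M r in \<open>simp add: \<beta>_def\<close>)
    show "(\<beta> r \<longlongrightarrow> 0) at_top"
      unfolding \<beta>_def using M by real_asymp
  qed
  have "norm (blinfun_apply (T t) x) \<le> \<beta> (norm x) t" if "t \<ge> 0" for x :: 'a and t :: real
  proof -
    have "norm (blinfun_apply (T t) x) \<le> norm (T t) * norm x" by (rule norm_blinfun)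
    also have "\<dots> \<le> M * exp (- l * t) * norm x" using M that by (intro mult_right_mono) auto
    finally show ?thesis by (simp add: \<beta>_def mult_ac)
  qed
  then show ?thesis using KL unfolding UGAS_def by blast
qed

lemma UGAS_to_uga:
  fixes T :: "real \<Rightarrow> ('a::banach \<Rightarrow>\<^sub>L 'a)"
  assumes "UGAS T"
  shows "unif_glob_attractive T"
  unfolding unif_glob_attractive_def
proof (intro allI impI)
  fix r e :: real assume r: "r > 0" and e: "e > 0"
  obtain \<beta> where KL: "class_KL \<beta>" and b: "\<And>(x::'a) t. t \<ge> 0 \<Longrightarrow> norm (blinfun_apply (T t) x) \<le> \<beta> (norm x) t"
    using assms unfolding UGAS_def by blast
  have "\<forall>\<^sub>F t in at_top. \<beta> r t < e"
    using KL r e unfolding class_KL_def by (metis order_tendstoD(2))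
  then obtain N where N: "\<And>t. t \<ge> N \<Longrightarrow> \<beta> r t < e" by (auto simp: eventually_at_top_linorder)
  show "\<exists>\<tau>\<ge>0. \<forall>x t. norm x \<le> r \<longrightarrow> \<tau> \<le> t \<longrightarrow> norm (blinfun_apply (T t) x) \<le> e"
  proof (intro exI[of _ "max N 0"] conjI allI impI)
    fix x :: 'a and t :: real assume x: "norm x \<le> r" and t: "max N 0 \<le> t"
    have mono: "strict_mono_on {0..} (\<lambda>r. \<beta> r t)" using KL t unfolding class_KL_def class_K_def by auto
    have "\<beta> (norm x) t \<le> \<beta> r t"
      using x r strict_mono_on_leD[OF mono, of "norm x" r] by auto
    then show "norm (blinfun_apply (T t) x) \<le> e" using b[of t x] N[of t] t by auto
  qed simp
qed

lemma uga_to_ugwa: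
  fixes T :: "real \<Rightarrow> ('a::banach \<Rightarrow>\<^sub>L 'a)"
  assumes "unif_glob_attractive T"
  shows "unif_glob_weakly_attractive T"
  unfolding unif_glob_weakly_attractive_def
proof (intro allI impI)
  fix r e :: real assume e: "e > 0" and r: "r > 0"
  obtain \<tau> where "\<tau> \<ge> 0" "\<And>(x::'a) t. norm x \<le> r \<Longrightarrow> \<tau> \<le> t \<Longrightarrow> norm (blinfun_apply (T t) x) \<le> e"
    using assms r e unfolding unif_glob_attractive_def by blast
  then show "\<exists>\<tau>\<ge>0. \<forall>x. norm x \<le> r \<longrightarrow> (\<exists>t. 0 \<le> t \<and> t \<le> \<tau> \<and> norm (blinfun_apply (T t) x) \<le> e)"
    by (intro exI[of _ \<tau>]) auto
qed



lemma half_pow_exp: fixes n :: nat shows "(1/2::real)^n = exp (- ln 2 * real n)"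
proof -
  have e1: "exp (real n * ln 2) = exp (ln 2) ^ n" by (rule exp_of_nat_mult)
  have e2: "exp (ln 2) = (2::real)" by simp
  have e: "exp (real n * ln 2) = 2 ^ n" unfolding e1 e2 ..
  have h1: "(1/2::real)^n = inverse (2 ^ n)" by (simp only: power_one_over inverse_eq_divide)
  have h2: "exp (- ln 2 * real n) = inverse (exp (real n * ln 2))" by (simp add: exp_minus[symmetric] mult.commute)
  show ?thesis unfolding h1 h2 e ..
qed
lemma exp_step: fixes t L :: real and n :: nat assumes n2: "t / L < real n + 1"
  shows "(1/2::real)^n \<le> 2 * exp (- (ln 2 / L) * t)"
proof -
  have "ln 2 * (t / L - 1) \<le> ln 2 * real n"
    using n2 by (intro mult_left_mono) auto
  then have a: "exp (- ln 2 * real n) \<le> exp (- ln 2 * (t / L - 1))" by (simp only: exp_le_cancel_iff) 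
  have "- ln 2 * (t / L - 1) = ln 2 + (- (ln 2 / L) * t)" by (simp add: algebra_simps)
  then have b: "exp (- ln 2 * (t / L - 1)) = 2 * exp (- (ln 2 / L) * t)" by (simp only: exp_add exp_ln) 
  show ?thesis using a b half_pow_exp[of n] by linarith
qed

lemma ugwa_to_exp:
  fixes T :: "real \<Rightarrow> ('a::banach \<Rightarrow>\<^sub>L 'a)"
  assumes c0: "c0_semigroup T" and W: "unif_glob_weakly_attractive T"
  shows "exp_stable T"
proof -
  note sg = c0_facts(2)[OF c0]
  obtain c where c: "c \<ge> 1" "\<And>s. 0 \<le> s \<Longrightarrow> s \<le> 1 \<Longrightarrow> norm (T s) \<le> c"
    using c0_bound[OF c0, of 1] by blast
  obtain \<tau> where \<tau>: "\<tau> \<ge> 0" "\<And>x::'a. norm x \<le> 1 \<Longrightarrow> (\<exists>t. 0 \<le> t \<and> t \<le> \<tau> \<and> norm (blinfun_apply (T t) x) \<le> 1 / (2 * c))"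
  proof -
    have "1 / (2 * c) > 0" using c by simp
    from W[unfolded unif_glob_weakly_attractive_def, rule_format, OF this zero_less_one]
    show ?thesis using that by blast
  qed
  define L where "L = \<tau> + 1"
  have L: "L \<ge> 1" using \<tau> by (simp add: L_def)
  have half: "\<exists>s. 1 \<le> s \<and> s \<le> L \<and> norm (blinfun_apply (T s) x) \<le> norm x / 2" for x :: 'a
  proof (cases "x = 0")
    case True
    then show ?thesis using L by (intro exI[of _ 1]) auto
  next
    case False
    define y where "y = (1 / norm x) *\<^sub>R x"
    have ny: "norm y \<le> 1" using False by (simp add: y_def)
    obtain t1 where t1: "0 \<le> t1" "t1 \<le> \<tau>" "norm (blinfun_apply (T t1) y) \<le> 1 / (2 * c)"
      using \<tau>(2)[OF ny] by blast
    have eq: "blinfun_apply (T (1 + t1)) y = blinfun_apply (T 1) (blinfun_apply (T t1) y)"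
      using sg[of 1 t1 y] t1 by simp
    have "norm (blinfun_apply (T (1 + t1)) y) \<le> norm (T 1) * norm (blinfun_apply (T t1) y)"
      unfolding eq by (rule norm_blinfun)
    also have "\<dots> \<le> c * (1 / (2 * c))"
      using c t1 by (intro mult_mono) auto
    also have "\<dots> = 1 / 2" using c by simp
    finally have ys: "norm (blinfun_apply (T (1 + t1)) y) \<le> 1 / 2" .
    have "x = norm x *\<^sub>R y" using False by (simp add: y_def)
    then have "blinfun_apply (T (1 + t1)) x = norm x *\<^sub>R blinfun_apply (T (1 + t1)) y"
      by (metis blinfun.scaleR_right)
    then have "norm (blinfun_apply (T (1 + t1)) x) = norm x * norm (blinfun_apply (T (1 + t1)) y)"
      by simp
    also have "\<dots> \<le> norm x * (1 / 2)" using ys by (intro mult_left_mono) auto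
    finally show ?thesis using t1 by (intro exI[of _ "1 + t1"]) (auto simp: L_def)
  qed
  obtain K where K: "K \<ge> 1" "\<And>s. 0 \<le> s \<Longrightarrow> s \<le> L \<Longrightarrow> norm (T s) \<le> K"
    using c0_bound[OF c0, of L] by blast
  have glob: "\<forall>x t. 0 \<le> t \<longrightarrow> t \<le> real n \<longrightarrow> norm (blinfun_apply (T t) x) \<le> K * norm x" for n
  proof (induction n)
    case 0
    show ?case
    proof (intro allI impI)
      fix x :: 'a and t :: real assume "0 \<le> t" "t \<le> real 0"
      then have "norm (T t) \<le> K" using K L by auto
      then show "norm (blinfun_apply (T t) x) \<le> K * norm x"
        by (meson norm_blinfun order_trans mult_right_mono norm_ge_zero)
    qed
  next
    case (Suc n)
    show ?case
    proof (intro allI impI)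
      fix x :: 'a and t :: real assume t: "0 \<le> t" "t \<le> real (Suc n)"
      show "norm (blinfun_apply (T t) x) \<le> K * norm x"
      proof (cases "t \<le> L")
        case True
        then have "norm (T t) \<le> K" using K t by auto
        then show ?thesis by (meson norm_blinfun order_trans mult_right_mono norm_ge_zero)
      next
        case False
        obtain s where s: "1 \<le> s" "s \<le> L" "norm (blinfun_apply (T s) x) \<le> norm x / 2"
          using half by blast
        have eq: "blinfun_apply (T t) x = blinfun_apply (T (t - s)) (blinfun_apply (T s) x)"
          using sg[of "t - s" s x] s False by simp
        have "norm (blinfun_apply (T t) x) \<le> K * norm (blinfun_apply (T s) x)"
          unfolding eq using Suc.IH s t False by auto
        also have "\<dots> \<le> K * (norm x / 2)" using s K by (intro mult_left_mono) auto
        also have "\<dots> \<le> K * norm x" using K by (simp add: field_simps)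
        finally show ?thesis .
      qed
    qed
  qed
  have glob': "norm (blinfun_apply (T t) x) \<le> K * norm x" if "t \<ge> 0" for t x
  proof -
    obtain n :: nat where "t \<le> real n" using real_arch_simple by blast
    then show ?thesis using glob[of n] that by blast
  qed
  have decay: "\<forall>x t. real n * L \<le> t \<longrightarrow> norm (blinfun_apply (T t) x) \<le> K * (1/2)^n * norm x" for n
  proof (induction n)
    case 0
    then show ?case using glob' L by auto
  next
    case (Suc n)
    show ?case
    proof (intro allI impI)
      fix x :: 'a and t :: real assume t: "real (Suc n) * L \<le> t"
      obtain s where s: "1 \<le> s" "s \<le> L" "norm (blinfun_apply (T s) x) \<le> norm x / 2"
        using half by blast
      have tn: "real n * L \<le> t - s" using t s by (simp add: algebra_simps)
      have "0 \<le> real n * L" using L by simp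
      then have t0: "t - s \<ge> 0" using tn by linarith
      have eq: "blinfun_apply (T t) x = blinfun_apply (T (t - s)) (blinfun_apply (T s) x)"
        using sg[of "t - s" s x] s t0 by simp
      have "norm (blinfun_apply (T t) x) \<le> K * (1/2)^n * norm (blinfun_apply (T s) x)"
        unfolding eq using Suc.IH tn by blast
      also have "\<dots> \<le> K * (1/2)^n * (norm x / 2)" using s K by (intro mult_left_mono) auto
      also have "\<dots> = K * (1/2)^Suc n * norm x" by simp
      finally show "norm (blinfun_apply (T t) x) \<le> K * (1/2)^Suc n * norm x" .
    qed
  qed
  show ?thesis
    unfolding exp_stable_def
  proof (rule exI[of _ "2 * K"], rule exI[of _ "ln 2 / L"], intro conjI allI impI)
    show "2 * K > 0" using K by auto
    show "ln 2 / L > 0" using L by auto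
    fix t :: real assume t: "t \<ge> 0"
    define n where "n = nat \<lfloor>t / L\<rfloor>"
    have n1: "real n * L \<le> t"
    proof -
      have "real_of_int \<lfloor>t / L\<rfloor> \<le> t / L" by (rule of_int_floor_le)
      then have "real_of_int \<lfloor>t / L\<rfloor> * L \<le> t" using L by (simp add: le_divide_eq)
      then show ?thesis using t L by (simp add: n_def)
    qed
    have n2: "t / L < real n + 1"
      using t L by (simp add: n_def)
    have "norm (T t) \<le> K * (1/2)^n"
      using decay[of n] n1 K by (intro norm_blinfun_bound) auto
    also have "\<dots> \<le> K * (2 * exp (- (ln 2 / L) * t))"
      using exp_step[OF n2] K by (intro mult_left_mono) auto
    finally show "norm (T t) \<le> 2 * K * exp (- (ln 2 / L) * t)" by (simp add: mult.assoc mult.left_commute)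
  qed
qed



lemma dini_decrease:
  fixes g :: "real \<Rightarrow> real"
  assumes cont: "continuous_on {0..\<tau>} g" and tau: "\<tau> \<ge> 0"
    and dini: "\<And>t. 0 \<le> t \<Longrightarrow> t < \<tau> \<Longrightarrow> (\<exists>\<^sub>F h in at_right 0. (g (t + h) - g t) / h < - c)"
  shows "g \<tau> + c * \<tau> \<le> g 0"
proof -
  define k where "k t = g t + c * t" for t
  have kc: "continuous_on {0..\<tau>} k" unfolding k_def by (intro continuous_intros cont)
  define S where "S = {0..\<tau>} \<inter> k -` {..k 0}"
  have Sc: "closed S" unfolding S_def by (intro continuous_closed_preimage kc) auto
  have S0: "0 \<in> S" using tau by (simp add: S_def)
  have Sb: "bdd_above S" by (rule bdd_aboveI[of _ \<tau>]) (auto simp: S_def)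
  define s where "s = Sup S"
  have sS: "s \<in> S" unfolding s_def using closed_contains_Sup[OF _ Sb Sc] S0 by blast
  have "s = \<tau>"
  proof (rule ccontr)
    assume "s \<noteq> \<tau>"
    then have s: "0 \<le> s" "s < \<tau>" using sS by (auto simp: S_def)
    have ev: "\<forall>\<^sub>F h in at_right 0. 0 < h \<and> h < \<tau> - s"
      using s by (auto simp: eventually_at_right_field intro!: exI[of _ "\<tau> - s"])
    from frequently_eventually_conj[OF dini[OF s] ev]
    obtain h where h: "0 < h" "h < \<tau> - s" "(g (s + h) - g s) / h < - c"
      by (auto dest: frequently_ex)
    have "g (s + h) - g s < - c * h" using h by (simp add: pos_divide_less_eq)
    then have "k (s + h) < k s" by (simp add: k_def algebra_simps)
    also have "k s \<le> k 0" using sS by (simp add: S_def)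
    finally have "s + h \<in> S" using h s by (simp add: S_def)
    then have "s + h \<le> s" unfolding s_def by (rule cSup_upper[OF _ Sb])
    then show False using h by simp
  qed
  then have "k \<tau> \<le> k 0" using sS by (simp add: S_def)
  then show ?thesis by (simp add: k_def)
qed


lemma lyap_to_ugwa:
  fixes T :: "real \<Rightarrow> ('a::banach \<Rightarrow>\<^sub>L 'a)"
  assumes c0: "c0_semigroup T" and LV: "noncoercive_lyapunov T V"
  shows "unif_glob_weakly_attractive T"
  unfolding unif_glob_weakly_attractive_def
proof (intro allI impI)
  fix e r :: real assume e: "e > 0" and r: "r > 0"
  obtain \<psi>2 \<alpha> where p: "class_Kinf \<psi>2" and a: "class_K \<alpha>"
    and Vc: "continuous_on UNIV V"
    and L: "\<And>x. x \<noteq> 0 \<Longrightarrow> 0 < V x \<and> V x \<le> \<psi>2 (norm x) \<and>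
           Liminf (at_right 0) (\<lambda>t. ereal ((V (blinfun_apply (T t) x) - V x) / t)) \<le> ereal (- \<alpha> (norm x))"
    using LV unfolding noncoercive_lyapunov_def by blast
  have am: "strict_mono_on {0..} \<alpha>" "\<alpha> 0 = 0" using a by (auto simp: class_K_def)
  have pm: "strict_mono_on {0..} \<psi>2" "\<psi>2 0 = 0" using p by (auto simp: class_Kinf_def class_K_def)
  define A where "A = \<alpha> e"
  have A: "A > 0" using strict_mono_onD[OF am(1), of 0 e] e am(2) by (simp add: A_def)
  have pr: "\<psi>2 r \<ge> 0" using strict_mono_on_leD[OF pm(1), of 0 r] r pm(2) by simp
  define \<tau> where "\<tau> = 2 * \<psi>2 r / A + 1"
  have tau: "\<tau> \<ge> 0" using A pr by (simp add: \<tau>_def)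
  show "\<exists>\<tau>\<ge>0. \<forall>x. norm x \<le> r \<longrightarrow> (\<exists>t. 0 \<le> t \<and> t \<le> \<tau> \<and> norm (blinfun_apply (T t) x) \<le> e)"
  proof (rule exI[of _ \<tau>], intro conjI allI impI tau, rule ccontr)
    fix x :: 'a assume x: "norm x \<le> r" and neg: "\<not> (\<exists>t. 0 \<le> t \<and> t \<le> \<tau> \<and> norm (blinfun_apply (T t) x) \<le> e)"
    then have big: "\<And>t. 0 \<le> t \<Longrightarrow> t \<le> \<tau> \<Longrightarrow> norm (blinfun_apply (T t) x) > e" by force
    define g where "g t = V (blinfun_apply (T t) x)" for t
    have gc: "continuous_on {0..\<tau>} g"
      unfolding g_def
      by (rule continuous_on_compose2[OF Vc continuous_on_subset[OF c0_cont[OF c0]]]) auto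
    have dini: "\<exists>\<^sub>F h in at_right 0. (g (t + h) - g t) / h < - (A / 2)" if t: "0 \<le> t" "t < \<tau>" for t
    proof -
      define y where "y = blinfun_apply (T t) x"
      have ny: "norm y > e" using big[of t] t by (simp add: y_def)
      then have y0: "y \<noteq> 0" using e by auto
      have "\<alpha> e \<le> \<alpha> (norm y)" using strict_mono_on_leD[OF am(1), of e "norm y"] e ny by simp
      then have LL: "Liminf (at_right 0) (\<lambda>h. ereal ((V (blinfun_apply (T h) y) - V y) / h)) \<le> ereal (- A)"
      proof -
        have "ereal (- \<alpha> (norm y)) \<le> ereal (- A)" using \<open>\<alpha> e \<le> \<alpha> (norm y)\<close> by (simp add: A_def)
        moreover have "Liminf (at_right 0) (\<lambda>h. ereal ((V (blinfun_apply (T h) y) - V y) / h)) \<le> ereal (- \<alpha> (norm y))"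
          using L[OF y0] by blast
        ultimately show ?thesis by (rule order_trans[rotated])
      qed
      have "ereal (- A) < ereal (- (A / 2))" using A by simp
      with LL have "Liminf (at_right 0) (\<lambda>h. ereal ((V (blinfun_apply (T h) y) - V y) / h)) < ereal (- (A / 2))"
        by (rule le_less_trans)
      then have "\<not> ereal (- (A / 2)) \<le> Liminf (at_right 0) (\<lambda>h. ereal ((V (blinfun_apply (T h) y) - V y) / h))"
        by (simp add: not_le)
      then obtain z where z: "z < ereal (- (A / 2))"
        "\<not> (\<forall>\<^sub>F h in at_right 0. z < ereal ((V (blinfun_apply (T h) y) - V y) / h))"
        unfolding le_Liminf_iff by blast
      then have fr: "\<exists>\<^sub>F h in at_right 0. ereal ((V (blinfun_apply (T h) y) - V y) / h) \<le> z"
        by (simp add: not_eventually not_less)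
      have ev: "\<forall>\<^sub>F h in at_right (0::real). 0 < h" by (simp add: eventually_at_right_field) (meson zero_less_one)
      show ?thesis
      proof (rule frequently_elim1[OF frequently_eventually_conj[OF fr ev]])
        fix h :: real assume h: "0 < h \<and> ereal ((V (blinfun_apply (T h) y) - V y) / h) \<le> z"
        have "blinfun_apply (T (t + h)) x = blinfun_apply (T h) y"
          using c0_facts(2)[OF c0, of h t x] h t by (simp add: y_def add.commute)
        then have "(g (t + h) - g t) / h = (V (blinfun_apply (T h) y) - V y) / h"
          by (simp add: g_def y_def)
        moreover have "ereal ((V (blinfun_apply (T h) y) - V y) / h) < ereal (- (A / 2))"
          using h z(1) by (meson le_less_trans)
        ultimately show "(g (t + h) - g t) / h < - (A / 2)" by (metis ereal_less_eq(3) leD leI)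
      qed
    qed
    have dec: "g \<tau> + A / 2 * \<tau> \<le> g 0"
      by (rule dini_decrease[OF gc tau dini])
    have x0: "x \<noteq> 0" using big[of 0] tau c0_facts(1)[OF c0] e by auto
    have "g 0 = V x" using c0_facts(1)[OF c0] by (simp add: g_def)
    also have "\<dots> \<le> \<psi>2 (norm x)" using L[OF x0] by blast
    also have "\<dots> \<le> \<psi>2 r" using strict_mono_on_leD[OF pm(1), of "norm x" r] x r by simp
    finally have g0: "g 0 \<le> \<psi>2 r" .
    have "blinfun_apply (T \<tau>) x \<noteq> 0" using big[of \<tau>] tau e by auto
    then have "g \<tau> > 0" using L by (simp add: g_def)
    moreover have "A / 2 * \<tau> = \<psi>2 r + A / 2" using A by (simp add: \<tau>_def field_simps)
    ultimately show False using dec g0 A by linarith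
  qed
qed



lemma exp_to_lyap:
  fixes T :: "real \<Rightarrow> ('a::banach \<Rightarrow>\<^sub>L 'a)"
  assumes c0: "c0_semigroup T" and ES: "exp_stable T"
  shows "\<exists>V. noncoercive_lyapunov T V"
proof -
  obtain M l where M: "M > 0" "l > 0" "\<And>t. t \<ge> 0 \<Longrightarrow> norm (T t) \<le> M * exp (- l * t)"
    using ES unfolding exp_stable_def by blast
  define f where "f x t = norm (blinfun_apply (T t) x) * exp (l * t)" for x t
  define V where "V x = (SUP t\<in>{0..}. f x t)" for x
  have fb: "f x t \<le> M * norm x" if "t \<ge> 0" for x t
  proof -
    have "norm (blinfun_apply (T t) x) \<le> M * exp (- l * t) * norm x"
      using norm_blinfun[of "T t" x] M(3)[OF that] by (meson mult_right_mono norm_ge_zero order_trans)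
    then have "f x t \<le> M * exp (- l * t) * norm x * exp (l * t)"
      unfolding f_def by (intro mult_right_mono) auto
    also have "\<dots> = M * norm x * (exp (- l * t) * exp (l * t))" by (simp only: mult_ac)
    also have "exp (- l * t) * exp (l * t) = 1" by (simp add: exp_add[symmetric])
    finally show ?thesis by simp
  qed
  have bdd: "bdd_above (f x ` {0..})" for x
    using fb by (intro bdd_aboveI[of _ "M * norm x"]) auto
  have Vup: "f x t \<le> V x" if "t \<ge> 0" for x t
    unfolding V_def using that by (intro cSUP_upper bdd) auto
  have Vle: "V x \<le> B" if "\<And>t. t \<ge> 0 \<Longrightarrow> f x t \<le> B" for x B
    unfolding V_def using that by (intro cSUP_least) auto
  have T0: "T 0 = id_blinfun" by (rule c0_facts(1)[OF c0])
  have Vlow: "norm x \<le> V x" for x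
    using Vup[of 0 x] by (simp add: f_def T0)
  have Vub: "V x \<le> M * norm x" for x by (rule Vle) (rule fb)
  have V0: "V 0 = 0" using Vlow[of 0] Vub[of 0] by simp
  have Vlip: "V x \<le> V y + M * norm (x - y)" for x y
  proof (rule Vle)
    fix t :: real assume t: "t \<ge> 0"
    have "f x t \<le> f y t + f (x - y) t"
    proof -
      have "blinfun_apply (T t) x = blinfun_apply (T t) y + blinfun_apply (T t) (x - y)"
        by (simp add: blinfun.diff_right)
      then have "norm (blinfun_apply (T t) x) \<le> norm (blinfun_apply (T t) y) + norm (blinfun_apply (T t) (x - y))"
        by (metis norm_triangle_ineq)
      then show ?thesis unfolding f_def by (simp add: distrib_right[symmetric])
    qed
    also have "\<dots> \<le> V y + M * norm (x - y)" using Vup[OF t, of y] fb[OF t, of "x - y"] by simp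
    finally show "f x t \<le> V y + M * norm (x - y)" .
  qed
  have Vcont: "continuous_on UNIV V"
    unfolding continuous_on_iff
  proof (intro ballI allI impI)
    fix x :: 'a and e :: real assume e: "e > 0"
    show "\<exists>d>0. \<forall>y\<in>UNIV. dist y x < d \<longrightarrow> dist (V y) (V x) < e"
    proof (intro exI[of _ "e / M"] conjI ballI impI)
      show "e / M > 0" using e M by simp
      fix y :: 'a assume "dist y x < e / M"
      then have d: "M * norm (y - x) < e" using M by (simp add: dist_norm field_simps)
      have "V y \<le> V x + M * norm (y - x)" by (rule Vlip)
      moreover have "V x \<le> V y + M * norm (y - x)" using Vlip[of x y] by (simp add: norm_minus_commute)
      ultimately show "dist (V y) (V x) < e" using d by (simp add: dist_real_def abs_le_iff)
    qed
  qed
  have Vshift: "V (blinfun_apply (T h) x) \<le> exp (- l * h) * V x" if h: "h \<ge> 0" for h x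
  proof (rule Vle)
    fix t :: real assume t: "t \<ge> 0"
    have eq: "blinfun_apply (T t) (blinfun_apply (T h) x) = blinfun_apply (T (t + h)) x"
      using c0_facts(2)[OF c0 t h] by simp
    have "f (blinfun_apply (T h) x) t = exp (- l * h) * f x (t + h)"
      unfolding f_def eq by (simp add: exp_add[symmetric] algebra_simps)
    also have "\<dots> \<le> exp (- l * h) * V x" using Vup[of "t + h" x] t h by simp
    finally show "f (blinfun_apply (T h) x) t \<le> exp (- l * h) * V x" .
  qed
  define \<psi>2 where "\<psi>2 r = M * r" for r :: real
  define \<alpha> where "\<alpha> r = l * r" for r :: real
  have K\<alpha>: "class_K \<alpha>" unfolding class_K_def \<alpha>_def
    by (auto intro!: continuous_intros strict_mono_onI simp: M)
  have K\<psi>: "class_Kinf \<psi>2" unfolding class_Kinf_def class_K_def \<psi>2_def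
  proof (intro conjI)
    show "\<not> bounded ((\<lambda>r. M * r) ` {0..})"
    proof
      assume "bounded ((\<lambda>r. M * r) ` {0..})"
      then obtain B where B: "\<And>z. z \<in> (\<lambda>r. M * r) ` {0..} \<Longrightarrow> norm z \<le> B"
        by (auto simp: bounded_iff)
      have "(\<lambda>r. M * r) ((\<bar>B\<bar> + 1) / M) \<in> (\<lambda>r. M * r) ` {0..}"
        by (rule imageI) (use M in auto)
      from B[OF this] M show False by simp
    qed
  qed (auto intro!: continuous_intros strict_mono_onI simp: M)
  have dini: "Liminf (at_right 0) (\<lambda>t. ereal ((V (blinfun_apply (T t) x) - V x) / t)) \<le> ereal (- \<alpha> (norm x))" for x
  proof -
    have der: "((\<lambda>h. exp (- l * h)) has_field_derivative (- l)) (at 0 within {0<..})"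
      by (auto intro!: derivative_eq_intros)
    have lim: "((\<lambda>h. (exp (- l * h) - 1) / h) \<longlongrightarrow> - l) (at_right 0)"
      using der unfolding has_field_derivative_iff by simp
    have lim2: "((\<lambda>h. ereal (V x * ((exp (- l * h) - 1) / h))) \<longlongrightarrow> ereal (V x * (- l))) (at_right 0)"
      by (intro tendsto_ereal tendsto_mult tendsto_const lim)
    have ev: "\<forall>\<^sub>F h in at_right 0. ereal ((V (blinfun_apply (T h) x) - V x) / h) \<le> ereal (V x * ((exp (- l * h) - 1) / h))"
    proof -
      have "\<forall>\<^sub>F h in at_right (0::real). 0 < h" by (simp add: eventually_at_right_field) (meson zero_less_one)
      then show ?thesis
      proof (rule eventually_mono)
        fix h :: real assume h: "0 < h"
        have "V (blinfun_apply (T h) x) - V x \<le> V x * (exp (- l * h) - 1)"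
          using Vshift[of h x] h by (simp add: algebra_simps)
        then have "(V (blinfun_apply (T h) x) - V x) / h \<le> V x * (exp (- l * h) - 1) / h"
          using h by (intro divide_right_mono) auto
        then show "ereal ((V (blinfun_apply (T h) x) - V x) / h) \<le> ereal (V x * ((exp (- l * h) - 1) / h))"
          by simp
      qed
    qed
    have "Liminf (at_right 0) (\<lambda>t. ereal ((V (blinfun_apply (T t) x) - V x) / t))
        \<le> Liminf (at_right 0) (\<lambda>h. ereal (V x * ((exp (- l * h) - 1) / h)))"
      by (rule Liminf_mono[OF ev])
    also have "\<dots> = ereal (V x * (- l))"
      by (rule lim_imp_Liminf[OF trivial_limit_at_right_real lim2])
    also have "\<dots> \<le> ereal (- \<alpha> (norm x))"
      using Vlow[of x] M by (simp add: \<alpha>_def)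
    finally show ?thesis .
  qed
  have Vnn: "\<forall>x. 0 \<le> V x" using Vlow norm_ge_zero order_trans by blast
  have nz: "\<forall>x. x \<noteq> 0 \<longrightarrow> 0 < V x \<and> V x \<le> \<psi>2 (norm x) \<and>
     Liminf (at_right 0) (\<lambda>t. ereal ((V (blinfun_apply (T t) x) - V x) / t)) \<le> ereal (- \<alpha> (norm x))"
  proof (intro allI impI conjI dini)
    fix x :: 'a assume "x \<noteq> 0"
    then show "0 < V x" using Vlow[of x] by (meson zero_less_norm_iff less_le_trans)
    show "V x \<le> \<psi>2 (norm x)" using Vub by (simp add: \<psi>2_def)
  qed
  have "noncoercive_lyapunov T V"
    unfolding noncoercive_lyapunov_def using Vcont V0 Vnn K\<alpha> K\<psi> nz by blast
  then show ?thesis by blast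
qed


theorem proposition32:
  fixes T :: "real \<Rightarrow> ('a::banach \<Rightarrow>\<^sub>L 'a)"
  assumes "c0_semigroup T"
  shows "(exp_stable T \<longleftrightarrow> UGAS T) \<and>
         (exp_stable T \<longleftrightarrow> unif_glob_attractive T) \<and>
         (exp_stable T \<longleftrightarrow> unif_glob_weakly_attractive T) \<and>
         (exp_stable T \<longleftrightarrow> (\<exists>V. noncoercive_lyapunov T V))"
proof -
  have i2: "exp_stable T \<Longrightarrow> UGAS T" by (rule exp_to_UGAS)
  have i3: "UGAS T \<Longrightarrow> unif_glob_attractive T" by (rule UGAS_to_uga)
  have i4: "unif_glob_attractive T \<Longrightarrow> unif_glob_weakly_attractive T" by (rule uga_to_ugwa)
  have i1: "unif_glob_weakly_attractive T \<Longrightarrow> exp_stable T" by (rule ugwa_to_exp[OF assms])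
  have i5: "exp_stable T \<Longrightarrow> \<exists>V. noncoercive_lyapunov T V" by (rule exp_to_lyap[OF assms])
  have i6: "\<exists>V. noncoercive_lyapunov T V \<Longrightarrow> unif_glob_weakly_attractive T"
    using lyap_to_ugwa[OF assms] by blast
  show ?thesis using i1 i2 i3 i4 i5 i6 by blast
qed

end
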